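(* Let $m\geq 2$ and let $\mathbf d=(d_1,d_2)$ be a nonzero pair of non-negative integers with $\langle\mathbf d,\mathbf d\rangle=d_1^2+d_2^2-md_1d_2\leq 0$ (so $d_1,d_2\geq1$). For $x\in[0,d_1]$ define $$c_{\mathbf d}(x)=\Bigl(mx+d_2-\sqrt{(mx-d_2)^2+4x(d_1-x)}\Bigr)/2.$$ Then for all $x\in[0,d_1]$ we have $\frac{d_2}{d_1}\,x\leq c_{\mathbf d}(x)\leq\min(mx,d_2)$.
   Context: The Euler form of $K(m)$ (two vertices, $m$ arrows from vertex $1$ to vertex $2$) is extended to $\mathbb R^2$ by $\langle(a_1,a_2),(b_1,b_2)\rangle=a_1b_1+a_2b_2-ma_1b_2$. For fixed $x\in[0,d_1]$, $c_{\mathbf d}(x)$ is the smaller of the two zeroes of the quadratic function $y\mapsto\langle(x,y),(d_1-x,d_2-y)\rangle$. *)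

theory Defs
  imports Complex_Main
begin

definition euler_form :: "nat \<Rightarrow> real \<times> real \<Rightarrow> real \<times> real \<Rightarrow> real" where
  "euler_form m a b = fst a * fst b + snd a * snd b - real m * fst a * snd b"

definition c_d :: "nat \<Rightarrow> nat \<times> nat \<Rightarrow> real \<Rightarrow> real" where
  "c_d m d x = (real m * x + real (snd d)
     - sqrt ((real m * x - real (snd d))^2 + 4 * x * (real (fst d) - x))) / 2"

end

theory Submission
  imports Defs
begin

theorem lemma3p2:
  fixes m d1 d2 :: nat and x :: real
  assumes "m \<ge> 2"
    and "(d1, d2) \<noteq> (0, 0)"
    and "euler_form m (real d1, real d2) (real d1, real d2) \<le> 0"
    and "0 \<le> x" and "x \<le> real d1"
  shows "real d2 / real d1 * x \<le> c_d m (d1, d2) x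
       \<and> c_d m (d1, d2) x \<le> min (real m * x) (real d2)"
proof -
  define D where "D = (real m * x - real d2)^2 + 4 * x * (real d1 - x)"
  have E: "real d1 ^ 2 + real d2 ^ 2 \<le> real m * real d1 * real d2"
    using assms(3) by (simp add: euler_form_def power2_eq_square)
  have d1: "real d1 > 0"
  proof (rule ccontr)
    assume "\<not> real d1 > 0"
    then have "d1 = 0" by simp
    with E have "real d2 ^ 2 \<le> 0" by simp
    then have "d2 = 0" by simp
    with \<open>d1 = 0\<close> assms(2) show False by simp
  qed
  have c: "c_d m (d1, d2) x = (real m * x + real d2 - sqrt D) / 2"
    by (simp add: c_d_def D_def)
  have Dge: "D \<ge> (real m * x - real d2)^2"
    unfolding D_def using assms(4,5) by simp
  have S1: "sqrt D \<ge> \<bar>real m * x - real d2\<bar>"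
    using Dge real_sqrt_le_mono by fastforce
  have up: "c_d m (d1, d2) x \<le> min (real m * x) (real d2)"
  proof -
    have "D \<ge> 0" using Dge by (meson order_trans zero_le_power2)
    then have "sqrt D \<ge> 0" by simp
    moreover have "\<bar>real m * x - real d2\<bar> \<ge> real m * x - real d2" "\<bar>real m * x - real d2\<bar> \<ge> real d2 - real m * x" by linarith+
    ultimately have "(real m * x + real d2 - sqrt D) / 2 \<le> real m * x \<and>
      (real m * x + real d2 - sqrt D) / 2 \<le> real d2" using S1 by argo
    then show ?thesis unfolding c by simp
  qed
  define t where "t = real d2 / real d1"
  have t0: "t \<ge> 0" unfolding t_def by simp
  have d2d1: "real d2 = t * real d1" unfolding t_def using d1 by simp
  have E2: "1 + t^2 - real m * t \<le> 0"
  proof -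
    have "real d1 ^ 2 * (1 + t^2 - real m * t) = real d1 ^ 2 + real d2 ^ 2 - real m * real d1 * real d2"
      unfolding d2d1 by (simp add: algebra_simps power2_eq_square)
    with E have "real d1 ^ 2 * (1 + t^2 - real m * t) \<le> 0" by simp
    with d1 show ?thesis by (simp add: mult_le_0_iff)
  qed
  have tm: "t \<le> real m"
  proof -
    have "t^2 \<le> real m * t" using E2 by simp
    then have "t * t \<le> real m * t" by (simp add: power2_eq_square)
    show ?thesis
    proof (cases "t = 0")
      case True then show ?thesis by simp
    next
      case False
      then have "t > 0" using t0 by simp
      with \<open>t * t \<le> real m * t\<close> show ?thesis by simp
    qed
  qed
  define R where "R = real m * x + real d2 - 2 * t * x"
  have R0: "R \<ge> 0"
  proof -
    have "real d2 - t * x = t * (real d1 - x)" unfolding d2d1 by (simp add: algebra_simps)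
    also have "\<dots> \<ge> 0" using t0 assms(5) by simp
    finally have a: "real d2 - t * x \<ge> 0" .
    have "(real m - t) * x \<ge> 0" using tm assms(4) by (intro mult_nonneg_nonneg) auto
    moreover have "(real m - t) * x = real m * x - t * x" by (simp add: algebra_simps)
    ultimately show ?thesis using a unfolding R_def by linarith
  qed
  have key: "R^2 - D = - 4 * (x * (real d1 - x) * (1 + t^2 - real m * t))"
    unfolding R_def D_def d2d1 power2_eq_square by algebra
  have "x * (real d1 - x) \<ge> 0" using assms(4,5) by simp
  then have "x * (real d1 - x) * (1 + t^2 - real m * t) \<le> 0"
    using E2 by (simp add: mult_nonneg_nonpos)
  then have "D \<le> R^2" using key by linarith
  then have "sqrt D \<le> R" by (rule real_le_lsqrt[OF R0])
  moreover have "2 * t * x = 2 * (t * x)" by simp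
  ultimately have low: "t * x \<le> c_d m (d1, d2) x" unfolding c R_def by argo
  show ?thesis using low up unfolding t_def by simp
qed

end
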